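(* Let $(\mathcal E,B,\mathcal L_{\mathcal P})$ be an epistemic space with $|\mathcal P|\ge2$. Any ES basic fusion operator that satisfies (ESF-SD), (ESF7), (ESF8W) and (ESF-I) also satisfies (ESF-D).
   Context: $[\![\phi]\!]$ denotes models; $\varphi_M$ a formula with models exactly $M$. Epistemic space: $\mathcal E$ nonempty, $B:\mathcal E\to\mathcal L_{\mathcal P}$ (propositional formulas over finite $\mathcal P$) with image modulo equivalence exactly the consistent formulas. Agents: well-ordered set $\mathcal S$; society: nonempty finite $N\subseteq\mathcal S$; $N$-profile $\Phi:N\to\mathcal E$, $E_i=\Phi(i)$, identified with $E_i$ if $N=\{i\}$; profiles on $\{i_1<\dots<i_n\}$, $\{j_1<\dots<j_m\}$ equivalent if $n=m$ and entries coincide position-wise; $\Phi\upharpoonright_M$ restriction; partition $\{N_1,N_2\}$: nonempty disjoint parts with union $N$. ES basic fusion operator: a map $\nabla(\Phi,E)\in\mathcal E$ with (ESF1) $B(\nabla(\Phi,E))\vdash B(E)$; (ESF2) equivalent profiles and $B(E)\equiv B(E')$ give equivalent $B(\nabla)$; (ESF3) if $B(E)\equiv B(E')\wedge B(E'')$ then $B(\nabla(\Phi,E'))\wedge B(E'')\vdash B(\nabla(\Phi,E))$; (ESF4) if moreover $B(\nabla(\Phi,E'))\wedge B(E'')\nvdash\bot$ then $B(\nabla(\Phi,E))\vdash B(\nabla(\Phi,E'))\wedge B(E'')$. (ESF7) $B(\nabla(\Phi\upharpoonright_{N_1},E))\wedge B(\nabla(\Phi\upharpoonright_{N_2},E))\vdash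 B(\nabla(\Phi,E))$; (ESF8W) if that conjunction is consistent then $B(\nabla(\Phi,E))\vdash B(\nabla(\Phi\upharpoonright_{N_1},E))\vee B(\nabla(\Phi\upharpoonright_{N_2},E))$. (ESF-SD): for every agent $i$, interpretations $w,w',w''$ and $E_{w,w'},E_{w',w''}$ with $[\![B(E_{w,w'})]\!]=\{w,w'\}$, $[\![B(E_{w',w''})]\!]=\{w',w''\}$, there exist $i$-profiles realising each of: (i) $B(\nabla(E_i,E_{w,w'}))\equiv\varphi_{w,w'}$ and $B(\nabla(E_i,E_{w',w''}))\equiv\varphi_{w',w''}$; (ii) $\equiv\varphi_{w,w'}$ and $\equiv\varphi_{w'}$; (iii) $\equiv\varphi_w$ and $\equiv\varphi_{w',w''}$; (iv) $\equiv\varphi_w$ and $\equiv\varphi_{w'}$. (ESF-I): for every $N$, $N$-profiles $\Phi,\Phi'$, $E$: if for every $E'$ with $B(E')\vdash B(E)$, $B(\nabla(E_j,E'))\equiv B(\nabla(E'_j,E'))$ for all $j\in N$, then $B(\nabla(\Phi,E))\equiv B(\nabla(\Phi',E))$. (ESF-D): for every society $N$ there exists $d_N\in N$ such that for every $N$-profile $\Phi$ and every $E$, $B(\nabla(\Phi,E))\vdash B(\nabla(E_{d_N},E))$. *)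

theory Defs
  imports Main
begin

datatype 'p form =
    Atom 'p
  | FBot
  | FNeg "'p form"
  | FConj "'p form" "'p form"
  | FDisj "'p form" "'p form"
  | FImp "'p form" "'p form"

type_synonym 'p interp = "'p \<Rightarrow> bool"

fun sat :: "'p interp \<Rightarrow> 'p form \<Rightarrow> bool" where
  "sat w (Atom p) = w p"
| "sat w FBot = False"
| "sat w (FNeg f) = (\<not> sat w f)"
| "sat w (FConj f g) = (sat w f \<and> sat w g)"
| "sat w (FDisj f g) = (sat w f \<or> sat w g)"
| "sat w (FImp f g) = (sat w f \<longrightarrow> sat w g)"

definition models :: "'p form \<Rightarrow> 'p interp set" where
  "models f = {w. sat w f}"

definition entails :: "'p form \<Rightarrow> 'p form \<Rightarrow> bool" where
  "entails f g \<longleftrightarrow> (\<forall>w. sat w f \<longrightarrow> sat w g)"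

definition equiv_form :: "'p form \<Rightarrow> 'p form \<Rightarrow> bool" where
  "equiv_form f g \<longleftrightarrow> entails f g \<and> entails g f"

definition consistent :: "'p form \<Rightarrow> bool" where
  "consistent f \<longleftrightarrow> \<not> entails f FBot"

text \<open>The set of epistemic states is the (nonempty) type 'e; B maps states to
formulas; the image of B modulo equivalence is exactly the consistent formulas.\<close>
definition epistemic_space :: "('e \<Rightarrow> 'p form) \<Rightarrow> bool" where
  "epistemic_space B \<longleftrightarrow>
     (\<forall>e. consistent (B e)) \<and> (\<forall>f. consistent f \<longrightarrow> (\<exists>e. equiv_form (B e) f))"

text \<open>Agents form the well-ordered type 'a. An N-profile is represented by a function 'a => 'e of which only the
values on N are relevant. A fusion operator is
  nabla :: 'a set => ('a => 'e) => 'e => 'e,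
where  nabla N Phi E  is the fusion of the N-profile Phi (restricted to N)
under integrity constraint E. Restriction of a profile to M is  nabla M Phi.
The single-agent profile E_i is the {i}-profile (\<lambda>_. E_i).\<close>

definition society :: "'a set \<Rightarrow> bool" where
  "society N \<longleftrightarrow> N \<noteq> {} \<and> finite N"

text \<open>Equivalent profiles: same length and the entries coincide position-wise
along the increasing enumerations of N and M.\<close>
definition equiv_profile ::
  "'a::linorder set \<Rightarrow> ('a \<Rightarrow> 'e) \<Rightarrow> 'a set \<Rightarrow> ('a \<Rightarrow> 'e) \<Rightarrow> bool" where
  "equiv_profile N Phi M Psi \<longleftrightarrow>
     map Phi (sorted_list_of_set N) = map Psi (sorted_list_of_set M)"

definition partition2 :: "'a set \<Rightarrow> 'a set \<Rightarrow> 'a set \<Rightarrow> bool" where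
  "partition2 N N1 N2 \<longleftrightarrow>
     N1 \<noteq> {} \<and> N2 \<noteq> {} \<and> N1 \<inter> N2 = {} \<and> N1 \<union> N2 = N"

definition es_basic_fusion ::
  "('e \<Rightarrow> 'p form) \<Rightarrow> ('a::linorder set \<Rightarrow> ('a \<Rightarrow> 'e) \<Rightarrow> 'e \<Rightarrow> 'e) \<Rightarrow> bool" where
  "es_basic_fusion B nabla \<longleftrightarrow>
     \<comment> \<open>ESF1\<close>
     (\<forall>N Phi E. society N \<longrightarrow> entails (B (nabla N Phi E)) (B E)) \<and>
     \<comment> \<open>ESF2\<close>
     (\<forall>N Phi M Psi E E'. society N \<longrightarrow> society M \<longrightarrow> equiv_profile N Phi M Psi \<longrightarrow>
        equiv_form (B E) (B E') \<longrightarrow> equiv_form (B (nabla N Phi E)) (B (nabla M Psi E'))) \<and>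
     \<comment> \<open>ESF3\<close>
     (\<forall>N Phi E E' E''. society N \<longrightarrow> equiv_form (B E) (FConj (B E') (B E'')) \<longrightarrow>
        entails (FConj (B (nabla N Phi E')) (B E'')) (B (nabla N Phi E))) \<and>
     \<comment> \<open>ESF4\<close>
     (\<forall>N Phi E E' E''. society N \<longrightarrow> equiv_form (B E) (FConj (B E') (B E'')) \<longrightarrow>
        consistent (FConj (B (nabla N Phi E')) (B E'')) \<longrightarrow>
        entails (B (nabla N Phi E)) (FConj (B (nabla N Phi E')) (B E'')))"

definition esf7 ::
  "('e \<Rightarrow> 'p form) \<Rightarrow> ('a set \<Rightarrow> ('a \<Rightarrow> 'e) \<Rightarrow> 'e \<Rightarrow> 'e) \<Rightarrow> bool" where
  "esf7 B nabla \<longleftrightarrow>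
     (\<forall>N N1 N2 Phi E. society N \<longrightarrow> partition2 N N1 N2 \<longrightarrow>
        entails (FConj (B (nabla N1 Phi E)) (B (nabla N2 Phi E))) (B (nabla N Phi E)))"

definition esf8w ::
  "('e \<Rightarrow> 'p form) \<Rightarrow> ('a set \<Rightarrow> ('a \<Rightarrow> 'e) \<Rightarrow> 'e \<Rightarrow> 'e) \<Rightarrow> bool" where
  "esf8w B nabla \<longleftrightarrow>
     (\<forall>N N1 N2 Phi E. society N \<longrightarrow> partition2 N N1 N2 \<longrightarrow>
        consistent (FConj (B (nabla N1 Phi E)) (B (nabla N2 Phi E))) \<longrightarrow>
        entails (B (nabla N Phi E)) (FDisj (B (nabla N1 Phi E)) (B (nabla N2 Phi E))))"

text \<open>(ESF-SD). The interpretations w, w', w'' are taken pairwise distinct.  "B(...) equivalent to phi_M" is rendered as "models (B ...) = M".\<close>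
definition esf_sd ::
  "('e \<Rightarrow> 'p form) \<Rightarrow> ('a set \<Rightarrow> ('a \<Rightarrow> 'e) \<Rightarrow> 'e \<Rightarrow> 'e) \<Rightarrow> bool" where
  "esf_sd B nabla \<longleftrightarrow>
     (\<forall>i w w' w'' E1 E2.
        w \<noteq> w' \<and> w' \<noteq> w'' \<and> w \<noteq> w'' \<longrightarrow>
        models (B E1) = {w, w'} \<longrightarrow> models (B E2) = {w', w''} \<longrightarrow>
        (\<exists>Ei. models (B (nabla {i} (\<lambda>_. Ei) E1)) = {w, w'} \<and>
              models (B (nabla {i} (\<lambda>_. Ei) E2)) = {w', w''}) \<and>
        (\<exists>Ei. models (B (nabla {i} (\<lambda>_. Ei) E1)) = {w, w'} \<and>
              models (B (nabla {i} (\<lambda>_. Ei) E2)) = {w'}) \<and>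
        (\<exists>Ei. models (B (nabla {i} (\<lambda>_. Ei) E1)) = {w} \<and>
              models (B (nabla {i} (\<lambda>_. Ei) E2)) = {w', w''}) \<and>
        (\<exists>Ei. models (B (nabla {i} (\<lambda>_. Ei) E1)) = {w} \<and>
              models (B (nabla {i} (\<lambda>_. Ei) E2)) = {w'}))"

definition esf_i ::
  "('e \<Rightarrow> 'p form) \<Rightarrow> ('a set \<Rightarrow> ('a \<Rightarrow> 'e) \<Rightarrow> 'e \<Rightarrow> 'e) \<Rightarrow> bool" where
  "esf_i B nabla \<longleftrightarrow>
     (\<forall>N Phi Phi' E. society N \<longrightarrow>
        (\<forall>E'. entails (B E') (B E) \<longrightarrow>
           (\<forall>j\<in>N. equiv_form (B (nabla {j} (\<lambda>_. Phi j) E')) (B (nabla {j} (\<lambda>_. Phi' j) E')))) \<longrightarrow>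
        equiv_form (B (nabla N Phi E)) (B (nabla N Phi' E)))"

definition esf_d ::
  "('e \<Rightarrow> 'p form) \<Rightarrow> ('a set \<Rightarrow> ('a \<Rightarrow> 'e) \<Rightarrow> 'e \<Rightarrow> 'e) \<Rightarrow> bool" where
  "esf_d B nabla \<longleftrightarrow>
     (\<forall>N. society N \<longrightarrow>
        (\<exists>d\<in>N. \<forall>Phi E. entails (B (nabla N Phi E)) (B (nabla {d} (\<lambda>_. Phi d) E))))"

end

theory Submission imports Defs begin

lemma entails_models: "entails f g \<longleftrightarrow> models f \<subseteq> models g"
  unfolding entails_def models_def by auto
lemma equiv_models: "equiv_form f g \<longleftrightarrow> models f = models g"
  unfolding equiv_form_def entails_def models_def by auto
lemma consistent_models: "consistent f \<longleftrightarrow> models f \<noteq> {}"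
  unfolding consistent_def entails_def models_def by auto
lemma models_simps[simp]: "models (FConj f g) = models f \<inter> models g"
  "models (FDisj f g) = models f \<union> models g"
  unfolding models_def by auto

fun conjs :: "'p form list \<Rightarrow> 'p form" where
  "conjs [] = FNeg FBot" | "conjs (f#fs) = FConj f (conjs fs)"
fun disjs :: "'p form list \<Rightarrow> 'p form" where
  "disjs [] = FBot" | "disjs (f#fs) = FDisj f (disjs fs)"
lemma sat_conjs: "sat v (conjs fs) \<longleftrightarrow> (\<forall>f\<in>set fs. sat v f)" by (induction fs) auto
lemma sat_disjs: "sat v (disjs fs) \<longleftrightarrow> (\<exists>f\<in>set fs. sat v f)" by (induction fs) auto

definition lit :: "'p interp \<Rightarrow> 'p \<Rightarrow> 'p form" where
  "lit w p = (if w p then Atom p else FNeg (Atom p))"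

lemma sat_lit: "sat v (lit w p) \<longleftrightarrow> v p = w p"
  by (auto simp: lit_def)

lemma definable:
  fixes M :: "('p::finite) interp set"
  shows "\<exists>f. models f = M"
proof -
  obtain ps :: "'p list" where ps: "set ps = UNIV" using finite_list[OF finite_UNIV] by blast
  have "finite M" by simp
  then obtain ws where ws: "set ws = M" using finite_list by blast
  let ?ch = "\<lambda>w. conjs (map (lit w) ps)"
  have ch: "sat v (?ch w) \<longleftrightarrow> v = w" for v w
    by (auto simp: sat_conjs sat_lit ps fun_eq_iff)
  have "models (disjs (map ?ch ws)) = M"
    unfolding models_def using ch by (auto simp: sat_disjs ws)
  thus ?thesis by blast
qed

lemma third:
  fixes a b :: "'p interp"
  assumes "card (UNIV :: 'p set) \<ge> 2"
  shows "\<exists>z. z \<noteq> a \<and> z \<noteq> b"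
proof -
  obtain p1 :: 'p where True by blast
  have "UNIV \<noteq> {p1}"
  proof
    assume "UNIV = {p1}"
    hence "card (UNIV :: 'p set) = card {p1}" by (rule arg_cong)
    hence "card (UNIV :: 'p set) = 1" by simp
    thus False using assms by simp
  qed
  then obtain p2 where p2: "p2 \<noteq> p1" by blast
  define f1 :: "'p interp" where "f1 = (\<lambda>_. True)"
  define f2 :: "'p interp" where "f2 = (\<lambda>_. False)"
  define f3 :: "'p interp" where "f3 = (\<lambda>q. q = p1)"
  have "f1 \<noteq> f2" "f1 \<noteq> f3" "f2 \<noteq> f3" unfolding f1_def f2_def f3_def fun_eq_iff using p2 by auto
  thus ?thesis by metis
qed


locale fus =
  fixes B :: "'e \<Rightarrow> 'p::finite form"
    and nabla :: "'a::wellorder set \<Rightarrow> ('a \<Rightarrow> 'e) \<Rightarrow> 'e \<Rightarrow> 'e"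
  assumes es: "epistemic_space B"
    and card2: "card (UNIV :: 'p set) \<ge> 2"
    and bf: "es_basic_fusion B nabla"
    and sd: "esf_sd B nabla"
    and e7: "esf7 B nabla"
    and e8: "esf8w B nabla"
    and ei: "esf_i B nabla"
begin

lemma B_ne: "models (B e) \<noteq> {}"
  using es unfolding epistemic_space_def consistent_models by blast

lemma ex_E: "M \<noteq> {} \<Longrightarrow> \<exists>e. models (B e) = M"
proof -
  assume "M \<noteq> {}"
  obtain f where f: "models f = M" using definable by blast
  hence "consistent f" using \<open>M \<noteq> {}\<close> by (simp add: consistent_models)
  then obtain e where "equiv_form (B e) f" using es unfolding epistemic_space_def by blast
  thus ?thesis using f by (auto simp: equiv_models)
qed

definition Eof :: "'p interp set \<Rightarrow> 'e" where "Eof M = (SOME e. models (B e) = M)"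

lemma Eof: "M \<noteq> {} \<Longrightarrow> models (B (Eof M)) = M"
  unfolding Eof_def by (rule someI_ex[OF ex_E])

definition C :: "'a set \<Rightarrow> ('a \<Rightarrow> 'e) \<Rightarrow> 'p interp set \<Rightarrow> 'p interp set" where
  "C N Phi M = models (B (nabla N Phi (Eof M)))"

lemma C_ne: "C N Phi M \<noteq> {}" unfolding C_def by (rule B_ne)

lemma esf1: "society N \<Longrightarrow> models (B (nabla N Phi E)) \<subseteq> models (B E)"
proof -
  assume N: "society N"
  have "\<forall>N Phi E. society N \<longrightarrow> entails (B (nabla N Phi E)) (B E)"
    using bf unfolding es_basic_fusion_def by (elim conjE)
  hence "entails (B (nabla N Phi E)) (B E)" using N by blast
  thus ?thesis by (simp add: entails_models)
qed

lemma esf2: "society N \<Longrightarrow> society M \<Longrightarrow> equiv_profile N Phi M Psi \<Longrightarrow>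
   models (B E) = models (B E') \<Longrightarrow> models (B (nabla N Phi E)) = models (B (nabla M Psi E'))"
  using bf unfolding es_basic_fusion_def equiv_models by blast

lemma esf3: "society N \<Longrightarrow> models (B E) = models (B E') \<inter> models (B E'') \<Longrightarrow>
   models (B (nabla N Phi E')) \<inter> models (B E'') \<subseteq> models (B (nabla N Phi E))"
proof -
  assume a: "society N" "models (B E) = models (B E') \<inter> models (B E'')"
  have "equiv_form (B E) (FConj (B E') (B E''))" using a(2) by (simp add: equiv_models)
  hence "entails (FConj (B (nabla N Phi E')) (B E'')) (B (nabla N Phi E))"
    using bf a(1) unfolding es_basic_fusion_def by blast
  thus ?thesis by (simp add: entails_models)
qed

lemma esf4: "society N \<Longrightarrow> models (B E) = models (B E') \<inter> models (B E'') \<Longrightarrow>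
   models (B (nabla N Phi E')) \<inter> models (B E'') \<noteq> {} \<Longrightarrow>
   models (B (nabla N Phi E)) \<subseteq> models (B (nabla N Phi E')) \<inter> models (B E'')"
proof -
  assume a: "society N" "models (B E) = models (B E') \<inter> models (B E'')"
    "models (B (nabla N Phi E')) \<inter> models (B E'') \<noteq> {}"
  have "equiv_form (B E) (FConj (B E') (B E''))" using a(2) by (simp add: equiv_models)
  moreover have "consistent (FConj (B (nabla N Phi E')) (B E''))" using a(3) by (simp add: consistent_models)
  ultimately have "entails (B (nabla N Phi E)) (FConj (B (nabla N Phi E')) (B E''))"
    using bf a(1) unfolding es_basic_fusion_def by blast
  thus ?thesis by (simp add: entails_models)
qed

lemma soc1[simp]: "society {i}" by (simp add: society_def)

lemma C_sub: "society N \<Longrightarrow> M \<noteq> {} \<Longrightarrow> C N Phi M \<subseteq> M"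
  unfolding C_def using esf1 Eof by metis

lemma C_E: assumes "society N" "models (B E) = M"
  shows "models (B (nabla N Phi E)) = C N Phi M"
proof -
  have M: "M \<noteq> {}" using assms(2) B_ne by blast
  show ?thesis unfolding C_def
    by (rule esf2[OF assms(1) assms(1)]) (auto simp: equiv_profile_def Eof[OF M] assms(2))
qed

lemma C_single: "C {i} Phi M = C {i} (\<lambda>_. Phi i) M"
  unfolding C_def by (rule esf2) (auto simp: equiv_profile_def)

lemma C_restrict: assumes "society N" "T \<subseteq> S" "T \<noteq> {}" "C N Phi S \<inter> T \<noteq> {}"
  shows "C N Phi T = C N Phi S \<inter> T"
proof -
  have S: "S \<noteq> {}" using assms by auto
  have eq: "models (B (Eof T)) = models (B (Eof S)) \<inter> models (B (Eof T))"
    using Eof[OF S] Eof[OF assms(3)] assms(2) by auto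
  have "C N Phi S \<inter> T \<subseteq> C N Phi T"
    using esf3[OF assms(1) eq, of Phi] unfolding C_def Eof[OF assms(3)] .
  moreover have "C N Phi T \<subseteq> C N Phi S \<inter> T"
    using esf4[OF assms(1) eq, of Phi] assms(4) unfolding C_def Eof[OF assms(3)] by blast
  ultimately show ?thesis by blast
qed

lemma C_singleton: "society N \<Longrightarrow> C N Phi {x} = {x}"
  using C_sub[of N "{x}" Phi] C_ne[of N Phi "{x}"] by auto

lemma restr2:
  assumes N: "society N" and sub: "{u,v} \<subseteq> S" and ne: "w \<in> C N Phi S" "w \<in> {u,v}"
  shows "C N Phi {u,v} = C N Phi S \<inter> {u,v}"
proof -
  have 1: "{u,v} \<noteq> {}" by simp
  have 2: "C N Phi S \<inter> {u,v} \<noteq> {}" using ne by blast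
  show ?thesis by (rule C_restrict[OF N sub 1 2])
qed

lemma three_el:
  assumes "D \<subseteq> {a,b,c}" "D \<noteq> {}" "b \<notin> D" "c \<notin> D"
  shows "a \<in> D"
proof -
  obtain x where x: "x \<in> D" using assms(2) by auto
  have "x \<in> {a,b,c}" using assms(1) x by (rule subsetD)
  thus ?thesis using x assms(3,4) by auto
qed

lemma trans1:
  assumes N: "society N" and d: "a \<noteq> b" "b \<noteq> c" "a \<noteq> c"
    and ab: "C N Phi {a,b} = {a}" and bc: "b \<in> C N Phi {b,c}"
  shows "C N Phi {a,c} = {a}"
proof -
  let ?T = "{a,b,c}"
  let ?D = "C N Phi ?T"
  have D1: "?D \<subseteq> ?T" by (rule C_sub[OF N]) simp
  have D2: "?D \<noteq> {}" by (rule C_ne)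
  have nb: "b \<notin> ?D"
  proof
    assume b: "b \<in> ?D"
    have "C N Phi {a,b} = ?D \<inter> {a,b}" by (rule restr2[OF N _ b]) auto
    hence "b \<in> C N Phi {a,b}" using b by simp
    thus False using ab d by simp
  qed
  have nc: "c \<notin> ?D"
  proof
    assume c: "c \<in> ?D"
    have "C N Phi {b,c} = ?D \<inter> {b,c}" by (rule restr2[OF N _ c]) auto
    thus False using bc nb by simp
  qed
  have aD: "a \<in> ?D" by (rule three_el[OF D1 D2 nb nc])
  have "C N Phi {a,c} = ?D \<inter> {a,c}" by (rule restr2[OF N _ aD]) auto
  thus ?thesis using aD nc by auto
qed

lemma trans2:
  assumes N: "society N" and d: "a \<noteq> b" "b \<noteq> c" "a \<noteq> c"
    and ab: "a \<in> C N Phi {a,b}" and bc: "C N Phi {b,c} = {b}"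
  shows "C N Phi {a,c} = {a}"
proof -
  let ?T = "{a,b,c}"
  let ?D = "C N Phi ?T"
  have D1: "?D \<subseteq> ?T" by (rule C_sub[OF N]) simp
  have D2: "?D \<noteq> {}" by (rule C_ne)
  have nc: "c \<notin> ?D"
  proof
    assume c: "c \<in> ?D"
    have "C N Phi {b,c} = ?D \<inter> {b,c}" by (rule restr2[OF N _ c]) auto
    hence "c \<in> C N Phi {b,c}" using c by simp
    thus False using bc d by simp
  qed
  have aD: "a \<in> ?D"
  proof (cases "b \<in> ?D")
    case True
    have "C N Phi {a,b} = ?D \<inter> {a,b}" by (rule restr2[OF N _ True]) auto
    thus ?thesis using ab by simp
  next
    case False thus ?thesis by (rule three_el[OF D1 D2 _ nc])
  qed
  have "C N Phi {a,c} = ?D \<inter> {a,c}" by (rule restr2[OF N _ aD]) auto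
  thus ?thesis using aD nc by auto
qed

lemma pareto:
  assumes "finite M" "M \<noteq> {}" "S \<noteq> {}" "\<forall>i\<in>M. C {i} Phi S = T"
  shows "C M Phi S = T"
  using assms(1,2,4)
proof (induction M rule: finite_ne_induct)
  case (singleton x) thus ?case by simp
next
  case (insert i F)
  have soc: "society (insert i F)" by (simp add: society_def insert.hyps)
  have part: "partition2 (insert i F) {i} F" using insert.hyps by (auto simp: partition2_def)
  have Ci: "C {i} Phi S = T" using insert.prems by simp
  have CF: "C F Phi S = T" using insert.IH insert.prems by simp
  have T: "T \<noteq> {}" using Ci C_ne by metis
  have "entails (FConj (B (nabla {i} Phi (Eof S))) (B (nabla F Phi (Eof S)))) (B (nabla (insert i F) Phi (Eof S)))"
    using e7 soc part unfolding esf7_def by blast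
  hence 1: "C {i} Phi S \<inter> C F Phi S \<subseteq> C (insert i F) Phi S"
    unfolding entails_models C_def by simp
  have "consistent (FConj (B (nabla {i} Phi (Eof S))) (B (nabla F Phi (Eof S))))"
    using Ci CF T unfolding consistent_models C_def by simp
  hence "entails (B (nabla (insert i F) Phi (Eof S))) (FDisj (B (nabla {i} Phi (Eof S))) (B (nabla F Phi (Eof S))))"
    using e8 soc part unfolding esf8w_def by blast
  hence 2: "C (insert i F) Phi S \<subseteq> C {i} Phi S \<union> C F Phi S"
    unfolding entails_models C_def by simp
  show ?case using 1 2 Ci CF by auto
qed

lemma iia:
  assumes N: "society N" and ag: "\<forall>j\<in>N. C {j} Phi {x,y} = C {j} Phi' {x,y}"
  shows "C N Phi {x,y} = C N Phi' {x,y}"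
proof -
  have xy: "{x,y} \<noteq> {}" by simp
  have "\<forall>E'. entails (B E') (B (Eof {x,y})) \<longrightarrow>
           (\<forall>j\<in>N. equiv_form (B (nabla {j} (\<lambda>_. Phi j) E')) (B (nabla {j} (\<lambda>_. Phi' j) E')))"
  proof (intro allI impI ballI)
    fix E' j assume ent: "entails (B E') (B (Eof {x,y}))" and j: "j \<in> N"
    define M where "M = models (B E')"
    have M: "M \<subseteq> {x,y}" "M \<noteq> {}" using ent Eof[OF xy] B_ne unfolding M_def by (auto simp: entails_models)
    have cases: "M = {x} \<or> M = {y} \<or> M = {x,y}" using M by auto
    have eqC: "C {j} Phi M = C {j} Phi' M"
      using cases ag j C_singleton[OF soc1] by auto
    have "models (B (nabla {j} (\<lambda>_. Phi j) E')) = C {j} (\<lambda>_. Phi j) M"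
      by (rule C_E) (auto simp: M_def)
    also have "\<dots> = C {j} Phi M" by (rule C_single[symmetric])
    also have "\<dots> = C {j} Phi' M" by (rule eqC)
    also have "\<dots> = C {j} (\<lambda>_. Phi' j) M" by (rule C_single)
    also have "\<dots> = models (B (nabla {j} (\<lambda>_. Phi' j) E'))"
      by (rule C_E[symmetric]) (auto simp: M_def)
    finally show "equiv_form (B (nabla {j} (\<lambda>_. Phi j) E')) (B (nabla {j} (\<lambda>_. Phi' j) E'))"
      by (simp add: equiv_models)
  qed
  hence "equiv_form (B (nabla N Phi (Eof {x,y}))) (B (nabla N Phi' (Eof {x,y})))"
    using ei N unfolding esf_i_def by blast
  thus ?thesis unfolding C_def equiv_models .
qed

lemma sdl:
  assumes "a \<noteq> b" "b \<noteq> c" "a \<noteq> c"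
  shows "\<exists>E. C {i} (\<lambda>_. E) {a,b} = {a,b} \<and> C {i} (\<lambda>_. E) {b,c} = {b}"
    "\<exists>E. C {i} (\<lambda>_. E) {a,b} = {a} \<and> C {i} (\<lambda>_. E) {b,c} = {b,c}"
    "\<exists>E. C {i} (\<lambda>_. E) {a,b} = {a} \<and> C {i} (\<lambda>_. E) {b,c} = {b}"
proof -
  have e: "models (B (Eof {a,b})) = {a,b}" "models (B (Eof {b,c})) = {b,c}" using Eof by auto
  have H: "a \<noteq> b \<and> b \<noteq> c \<and> a \<noteq> c" using assms by simp
  note X = sd[unfolded esf_sd_def, rule_format, OF H e, of i]
  show "\<exists>E. C {i} (\<lambda>_. E) {a,b} = {a,b} \<and> C {i} (\<lambda>_. E) {b,c} = {b}"
    "\<exists>E. C {i} (\<lambda>_. E) {a,b} = {a} \<and> C {i} (\<lambda>_. E) {b,c} = {b,c}"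
    "\<exists>E. C {i} (\<lambda>_. E) {a,b} = {a} \<and> C {i} (\<lambda>_. E) {b,c} = {b}"
    using X unfolding C_def by blast+
qed


lemma two_cases: "D \<subseteq> {x,y} \<Longrightarrow> D \<noteq> {} \<Longrightarrow> D = {x} \<or> D = {y} \<or> D = {x,y}"
  by auto

lemma pair_cases: "society N \<Longrightarrow> C N Phi {x,y} = {x} \<or> C N Phi {x,y} = {y} \<or> C N Phi {x,y} = {x,y}"
  by (rule two_cases[OF C_sub C_ne]) auto

definition dec where
  "dec N G x y \<longleftrightarrow> (\<forall>Phi. (\<forall>i\<in>G. C {i} Phi {x,y} = {x}) \<longrightarrow> C N Phi {x,y} = {x})"

definition wdec where
  "wdec N G x y \<longleftrightarrow> (\<forall>Phi. (\<forall>i\<in>G. C {i} Phi {x,y} = {x}) \<and> (\<forall>i\<in>N-G. C {i} Phi {x,y} = {y})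
      \<longrightarrow> C N Phi {x,y} = {x})"

lemma dec_wdec: "dec N G x y \<Longrightarrow> wdec N G x y" unfolding dec_def wdec_def by blast

lemma third': "\<exists>z::'p interp. z \<noteq> a \<and> z \<noteq> b" using third[OF card2] .

lemma pareto2: "society N \<Longrightarrow> \<forall>i\<in>N. C {i} Phi {x,y} = T \<Longrightarrow> C N Phi {x,y} = T"
  by (rule pareto) (auto simp: society_def)

lemma L1:
  assumes N: "society N" and d: "x \<noteq> y" "y \<noteq> z" "x \<noteq> z" and w: "wdec N G x y"
  shows "dec N G x z"
  unfolding dec_def
proof (intro allI impI)
  fix Phi assume G: "\<forall>i\<in>G. C {i} Phi {x,z} = {x}"
  have "\<exists>E. C {i} (\<lambda>_. E) {x,z} = C {i} Phi {x,z} \<and> C {i} (\<lambda>_. E) {y,z} = {y} \<and>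
        C {i} (\<lambda>_. E) {x,y} = (if i \<in> G then {x} else {y})" for i
  proof (cases "i \<in> G")
    case True
    obtain E where E: "C {i} (\<lambda>_. E) {x,y} = {x}" "C {i} (\<lambda>_. E) {y,z} = {y}"
      using sdl(3)[OF d] by blast
    have "C {i} (\<lambda>_. E) {x,z} = {x}" using trans1[OF soc1 d E(1)] E(2) by simp
    thus ?thesis using E True G by auto
  next
    case False
    consider "C {i} Phi {x,z} = {x}" | "C {i} Phi {x,z} = {z}" | "C {i} Phi {x,z} = {x,z}"
      using pair_cases[OF soc1] by blast
    thus ?thesis
    proof cases
      case 1
      obtain E where E: "C {i} (\<lambda>_. E) {y,x} = {y}" "C {i} (\<lambda>_. E) {x,z} = {x}"
        using sdl(3)[of y x z i] d by metis
      have "C {i} (\<lambda>_. E) {y,z} = {y}" using trans1[OF soc1 _ _ _ E(1)] E(2) d by auto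
      thus ?thesis using E 1 False by (auto simp: insert_commute)
    next
      case 2
      obtain E where E: "C {i} (\<lambda>_. E) {y,z} = {y}" "C {i} (\<lambda>_. E) {z,x} = {z}"
        using sdl(3)[of y z x i] d by metis
      have "C {i} (\<lambda>_. E) {y,x} = {y}" using trans1[OF soc1 _ _ _ E(1)] E(2) d by auto
      thus ?thesis using E 2 False by (auto simp: insert_commute)
    next
      case 3
      obtain E where E: "C {i} (\<lambda>_. E) {y,x} = {y}" "C {i} (\<lambda>_. E) {x,z} = {x,z}"
        using sdl(2)[of y x z i] d by metis
      have "C {i} (\<lambda>_. E) {y,z} = {y}" using trans1[OF soc1 _ _ _ E(1)] E(2) d by auto
      thus ?thesis using E 3 False by (auto simp: insert_commute)
    qed
  qed
  then obtain Psi where Psi: "\<And>i. C {i} (\<lambda>_. Psi i) {x,z} = C {i} Phi {x,z} \<and> C {i} (\<lambda>_. Psi i) {y,z} = {y} \<and>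
        C {i} (\<lambda>_. Psi i) {x,y} = (if i \<in> G then {x} else {y})" by metis
  have Ps: "C {i} Psi S = C {i} (\<lambda>_. Psi i) S" for i S by (rule C_single)
  have "(\<forall>i\<in>G. C {i} Psi {x,y} = {x}) \<and> (\<forall>i\<in>N-G. C {i} Psi {x,y} = {y})"
    using Psi Ps by simp
  hence 1: "C N Psi {x,y} = {x}" using w unfolding wdec_def by blast
  have "\<forall>i\<in>N. C {i} Psi {y,z} = {y}" using Psi Ps by simp
  hence 2: "C N Psi {y,z} = {y}" by (rule pareto2[OF N])
  have 3: "C N Psi {x,z} = {x}" using trans1[OF N d 1] 2 by simp
  have "\<forall>j\<in>N. C {j} Phi {x,z} = C {j} Psi {x,z}" using Psi Ps by simp
  hence "C N Phi {x,z} = C N Psi {x,z}" by (rule iia[OF N])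
  thus "C N Phi {x,z} = {x}" using 3 by simp
qed


lemma L2:
  assumes N: "society N" and d: "w \<noteq> x" "x \<noteq> y" "w \<noteq> y" and wd: "wdec N G x y"
  shows "dec N G w y"
  unfolding dec_def
proof (intro allI impI)
  fix Phi assume G: "\<forall>i\<in>G. C {i} Phi {w,y} = {w}"
  have "\<exists>E. C {i} (\<lambda>_. E) {w,y} = C {i} Phi {w,y} \<and> C {i} (\<lambda>_. E) {w,x} = {w} \<and>
        C {i} (\<lambda>_. E) {x,y} = (if i \<in> G then {x} else {y})" for i
  proof (cases "i \<in> G")
    case True
    obtain E where E: "C {i} (\<lambda>_. E) {w,x} = {w}" "C {i} (\<lambda>_. E) {x,y} = {x}"
      using sdl(3)[of w x y i] d by metis
    have "C {i} (\<lambda>_. E) {w,y} = {w}" using trans1[OF soc1 d E(1)] E(2) by simp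
    thus ?thesis using E True G by auto
  next
    case False
    consider "C {i} Phi {w,y} = {w}" | "C {i} Phi {w,y} = {y}" | "C {i} Phi {w,y} = {w,y}"
      using pair_cases[OF soc1] by blast
    thus ?thesis
    proof cases
      case 1
      obtain E where E: "C {i} (\<lambda>_. E) {w,y} = {w}" "C {i} (\<lambda>_. E) {y,x} = {y}"
        using sdl(3)[of w y x i] d by metis
      have "C {i} (\<lambda>_. E) {w,x} = {w}" using trans1[OF soc1 _ _ _ E(1)] E(2) d by auto
      thus ?thesis using E 1 False by (auto simp: insert_commute)
    next
      case 2
      obtain E where E: "C {i} (\<lambda>_. E) {y,w} = {y}" "C {i} (\<lambda>_. E) {w,x} = {w}"
        using sdl(3)[of y w x i] d by metis
      have "C {i} (\<lambda>_. E) {y,x} = {y}" using trans1[OF soc1 _ _ _ E(1)] E(2) d by auto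
      thus ?thesis using E 2 False by (auto simp: insert_commute)
    next
      case 3
      obtain E where E: "C {i} (\<lambda>_. E) {w,y} = {w,y}" "C {i} (\<lambda>_. E) {y,x} = {y}"
        using sdl(1)[of w y x i] d by metis
      have "C {i} (\<lambda>_. E) {w,x} = {w}" using trans2[OF soc1 _ _ _ _ E(2)] E(1) d by auto
      thus ?thesis using E 3 False by (auto simp: insert_commute)
    qed
  qed
  then obtain Psi where Psi: "\<And>i. C {i} (\<lambda>_. Psi i) {w,y} = C {i} Phi {w,y} \<and> C {i} (\<lambda>_. Psi i) {w,x} = {w} \<and>
        C {i} (\<lambda>_. Psi i) {x,y} = (if i \<in> G then {x} else {y})" by metis
  have Ps: "C {i} Psi S = C {i} (\<lambda>_. Psi i) S" for i S by (rule C_single)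
  have "(\<forall>i\<in>G. C {i} Psi {x,y} = {x}) \<and> (\<forall>i\<in>N-G. C {i} Psi {x,y} = {y})"
    using Psi Ps by simp
  hence 1: "C N Psi {x,y} = {x}" using wd unfolding wdec_def by blast
  have "\<forall>i\<in>N. C {i} Psi {w,x} = {w}" using Psi Ps by simp
  hence 2: "C N Psi {w,x} = {w}" by (rule pareto2[OF N])
  have 3: "C N Psi {w,y} = {w}" using trans1[OF N d 2] 1 by simp
  have "\<forall>j\<in>N. C {j} Phi {w,y} = C {j} Psi {w,y}" using Psi Ps by simp
  hence "C N Phi {w,y} = C N Psi {w,y}" by (rule iia[OF N])
  thus "C N Phi {w,y} = {w}" using 3 by simp
qed

lemma allpairs:
  assumes N: "society N" and w: "wdec N G x y" "x \<noteq> y" and ab: "a \<noteq> b"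
  shows "dec N G a b"
proof -
  have dx: "dec N G x c" if c: "c \<noteq> x" for c
  proof (cases "c = y")
    case True
    obtain z where z: "z \<noteq> x" "z \<noteq> y" using third' by blast
    have xz: "dec N G x z" using L1[OF N _ _ _ w(1)] z w(2) by auto
    have "dec N G x y" by (rule L1[OF N _ _ _ dec_wdec[OF xz]]) (use z w(2) in auto)
    thus ?thesis using True by simp
  next
    case False thus ?thesis using L1[OF N _ _ _ w(1)] c w(2) by auto
  qed
  show ?thesis
  proof (cases "a = x")
    case True thus ?thesis using dx ab by auto
  next
    case ax: False
    show ?thesis
    proof (cases "b = x")
      case False
      have "dec N G x b" using dx False by auto
      thus ?thesis using L2[OF N _ _ _ dec_wdec] ax False ab by auto
    next
      case True
      obtain z where z: "z \<noteq> a" "z \<noteq> x" using third' by blast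
      have "dec N G x z" using dx z by auto
      hence "dec N G a z" using L2[OF N _ _ _ dec_wdec] ax z by auto
      hence az: "dec N G a z" .
      have "dec N G a x" by (rule L1[OF N _ _ _ dec_wdec[OF az]]) (use ax z in auto)
      thus ?thesis using True by simp
    qed
  qed
qed

lemma contract:
  assumes N: "society N" and GN: "G \<subseteq> N" and G: "G = G1 \<union> G2" "G1 \<inter> G2 = {}"
    and dG: "\<forall>a b. a \<noteq> b \<longrightarrow> dec N G a b"
  shows "(\<exists>x y. x \<noteq> y \<and> wdec N G1 x y) \<or> (\<exists>x y. x \<noteq> y \<and> wdec N G2 x y)"
proof -
  obtain x :: "'p interp" where True by blast
  obtain y where y: "y \<noteq> x" using third'[of x x] by blast
  obtain z where z: "z \<noteq> x" "z \<noteq> y" using third' by blast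
  have d: "x \<noteq> y" "y \<noteq> z" "x \<noteq> z" using y z by auto
  have "\<exists>E. (i \<in> G1 \<longrightarrow> C {i} (\<lambda>_. E) {x,y} = {x} \<and> C {i} (\<lambda>_. E) {y,z} = {y} \<and> C {i} (\<lambda>_. E) {x,z} = {x})
          \<and> (i \<in> G2 \<longrightarrow> C {i} (\<lambda>_. E) {x,y} = {x} \<and> C {i} (\<lambda>_. E) {y,z} = {z} \<and> C {i} (\<lambda>_. E) {x,z} = {z})
          \<and> (i \<notin> G \<longrightarrow> C {i} (\<lambda>_. E) {x,y} = {y} \<and> C {i} (\<lambda>_. E) {y,z} = {y} \<and> C {i} (\<lambda>_. E) {x,z} = {z})" for i
  proof (cases "i \<in> G1")
    case True
    obtain E where E: "C {i} (\<lambda>_. E) {x,y} = {x}" "C {i} (\<lambda>_. E) {y,z} = {y}"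
      using sdl(3)[of x y z i] d by metis
    have "C {i} (\<lambda>_. E) {x,z} = {x}" using trans1[OF soc1 d E(1)] E(2) by simp
    thus ?thesis using E True G by auto
  next
    case n1: False
    show ?thesis
    proof (cases "i \<in> G2")
      case True
      obtain E where E: "C {i} (\<lambda>_. E) {z,x} = {z}" "C {i} (\<lambda>_. E) {x,y} = {x}"
        using sdl(3)[of z x y i] d by metis
      have "C {i} (\<lambda>_. E) {z,y} = {z}" using trans1[OF soc1 _ _ _ E(1)] E(2) d by auto
      thus ?thesis using E True G n1 by (auto simp: insert_commute)
    next
      case False
      obtain E where E: "C {i} (\<lambda>_. E) {y,z} = {y}" "C {i} (\<lambda>_. E) {z,x} = {z}"
        using sdl(3)[of y z x i] d by metis
      have "C {i} (\<lambda>_. E) {y,x} = {y}" using trans1[OF soc1 _ _ _ E(1)] E(2) d by auto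
      thus ?thesis using E False G n1 by (auto simp: insert_commute)
    qed
  qed
  then obtain Psi where Psi: "\<And>i. (i \<in> G1 \<longrightarrow> C {i} (\<lambda>_. Psi i) {x,y} = {x} \<and> C {i} (\<lambda>_. Psi i) {y,z} = {y} \<and> C {i} (\<lambda>_. Psi i) {x,z} = {x})
          \<and> (i \<in> G2 \<longrightarrow> C {i} (\<lambda>_. Psi i) {x,y} = {x} \<and> C {i} (\<lambda>_. Psi i) {y,z} = {z} \<and> C {i} (\<lambda>_. Psi i) {x,z} = {z})
          \<and> (i \<notin> G \<longrightarrow> C {i} (\<lambda>_. Psi i) {x,y} = {y} \<and> C {i} (\<lambda>_. Psi i) {y,z} = {y} \<and> C {i} (\<lambda>_. Psi i) {x,z} = {z})"
    by metis
  have Ps: "C {i} Psi S = C {i} (\<lambda>_. Psi i) S" for i S by (rule C_single)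
  have "\<forall>i\<in>G. C {i} Psi {x,y} = {x}" using Psi Ps G by auto
  hence 1: "C N Psi {x,y} = {x}" using dG d unfolding dec_def by blast
  consider "C N Psi {y,z} = {z}" | "y \<in> C N Psi {y,z}"
    using pair_cases[OF N, of Psi y z] by auto
  thus ?thesis
  proof cases
    case 1
    have W: "wdec N G2 z y" unfolding wdec_def
    proof (intro allI impI)
      fix Phi assume A: "(\<forall>i\<in>G2. C {i} Phi {z,y} = {z}) \<and> (\<forall>i\<in>N-G2. C {i} Phi {z,y} = {y})"
      have "\<forall>j\<in>N. C {j} Phi {z,y} = C {j} Psi {z,y}"
      proof
        fix j assume j: "j \<in> N"
        show "C {j} Phi {z,y} = C {j} Psi {z,y}"
        proof (cases "j \<in> G2")
          case True thus ?thesis using A Psi[of j] Ps[of j] by (auto simp: insert_commute)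
        next
          case False
          hence "j \<in> G1 \<or> j \<notin> G" using G by auto
          thus ?thesis using A Psi[of j] Ps[of j] j False by (auto simp: insert_commute)
        qed
      qed
      hence "C N Phi {z,y} = C N Psi {z,y}" by (rule iia[OF N])
      thus "C N Phi {z,y} = {z}" using 1 by (simp add: insert_commute)
    qed
    have "z \<noteq> y \<and> wdec N G2 z y" using W d by simp
    hence "\<exists>x y. x \<noteq> y \<and> wdec N G2 x y" by (rule exI[of _ z, OF exI[of _ y]])
    thus ?thesis by (rule disjI2)
  next
    case 2
    have 3: "C N Psi {x,z} = {x}" using trans1[OF N d \<open>C N Psi {x,y} = {x}\<close> 2] .
    have W: "wdec N G1 x z" unfolding wdec_def
    proof (intro allI impI)
      fix Phi assume A: "(\<forall>i\<in>G1. C {i} Phi {x,z} = {x}) \<and> (\<forall>i\<in>N-G1. C {i} Phi {x,z} = {z})"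
      have "\<forall>j\<in>N. C {j} Phi {x,z} = C {j} Psi {x,z}"
      proof
        fix j assume j: "j \<in> N"
        show "C {j} Phi {x,z} = C {j} Psi {x,z}"
        proof (cases "j \<in> G1")
          case True thus ?thesis using A Psi[of j] Ps[of j] by auto
        next
          case False
          hence "j \<in> G2 \<or> j \<notin> G" using G by auto
          thus ?thesis using A Psi[of j] Ps[of j] j False by auto
        qed
      qed
      hence "C N Phi {x,z} = C N Psi {x,z}" by (rule iia[OF N])
      thus "C N Phi {x,z} = {x}" using 3 by simp
    qed
    have "x \<noteq> z \<and> wdec N G1 x z" using W d by simp
    hence "\<exists>x y. x \<noteq> y \<and> wdec N G1 x y" by (rule exI[of _ x, OF exI[of _ z]])
    thus ?thesis by (rule disjI1)
  qed
qed

lemma dictator: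
  assumes N: "society N"
  shows "\<exists>d\<in>N. \<forall>a b. a \<noteq> b \<longrightarrow> dec N {d} a b"
proof -
  have main: "\<And>G. card G = n \<Longrightarrow> G \<subseteq> N \<Longrightarrow> G \<noteq> {} \<Longrightarrow> (\<forall>a b. a \<noteq> b \<longrightarrow> dec N G a b)
      \<Longrightarrow> \<exists>d\<in>G. \<forall>a b. a \<noteq> b \<longrightarrow> dec N {d} a b" for n
  proof (induction n rule: less_induct)
    case (less n G)
    have fin: "finite G" using less.prems(2) N finite_subset by (auto simp: society_def)
    obtain i where i: "i \<in> G" using less.prems(3) by blast
    show ?case
    proof (cases "G = {i}")
      case True thus ?thesis using less.prems(4) by auto
    next
      case False
      let ?G2 = "G - {i}"
      have ne: "?G2 \<noteq> {}" using False i by auto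
      have GG: "G = {i} \<union> ?G2" "{i} \<inter> ?G2 = {}" using i by auto
      have "(\<exists>x y. x \<noteq> y \<and> wdec N {i} x y) \<or> (\<exists>x y. x \<noteq> y \<and> wdec N ?G2 x y)"
        by (rule contract[OF N less.prems(2) GG less.prems(4)])
      thus ?thesis
      proof
        assume "\<exists>x y. x \<noteq> y \<and> wdec N {i} x y"
        then obtain x y where xy: "x \<noteq> y" and W: "wdec N {i} x y" by blast
        have "\<forall>a b. a \<noteq> b \<longrightarrow> dec N {i} a b"
          by (intro allI impI) (rule allpairs[OF N W xy])
        thus ?thesis using i by (rule bexI)
      next
        assume "\<exists>x y. x \<noteq> y \<and> wdec N ?G2 x y"
        then obtain x y where xy: "x \<noteq> y" and W: "wdec N ?G2 x y" by blast
        have d2: "\<forall>a b. a \<noteq> b \<longrightarrow> dec N ?G2 a b"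
          by (intro allI impI) (rule allpairs[OF N W xy])
        have "card ?G2 < n" using fin i less.prems(1) using card_Diff1_less[OF fin i] by simp
        moreover have "?G2 \<subseteq> N" using less.prems(2) by auto
        ultimately have "\<exists>d\<in>?G2. \<forall>a b. a \<noteq> b \<longrightarrow> dec N {d} a b"
          using less.IH[OF _ refl _ ne d2] by simp
        then obtain d where "d \<in> ?G2" "\<forall>a b. a \<noteq> b \<longrightarrow> dec N {d} a b" by (rule bexE)
        thus ?thesis by auto
      qed
    qed
  qed
  have dN: "\<forall>a b. a \<noteq> b \<longrightarrow> dec N N a b"
    unfolding dec_def using pareto2[OF N] by simp
  have ne: "N \<noteq> {}" using N by (simp add: society_def)
  show ?thesis by (rule main[OF refl subset_refl ne dN])
qed

lemma final: "esf_d B nabla"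
  unfolding esf_d_def
proof (intro allI impI)
  fix N :: "'a set" assume N: "society N"
  obtain d where d: "d \<in> N" "\<forall>a b. a \<noteq> b \<longrightarrow> dec N {d} a b" using dictator[OF N] by blast
  have "\<forall>Phi E. entails (B (nabla N Phi E)) (B (nabla {d} (\<lambda>_. Phi d) E))"
  proof (intro allI)
    fix Phi E
    define S where "S = models (B E)"
    have S: "S \<noteq> {}" unfolding S_def by (rule B_ne)
    have "C N Phi S \<subseteq> C {d} Phi S"
    proof
      fix x assume x: "x \<in> C N Phi S"
      show "x \<in> C {d} Phi S"
      proof (rule ccontr)
        assume nx: "x \<notin> C {d} Phi S"
        obtain y where y: "y \<in> C {d} Phi S" using C_ne by blast
        have xy: "x \<noteq> y" using nx y by auto
        have xS: "x \<in> S" using x C_sub[OF N S] by auto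
        have yS: "y \<in> S" using y C_sub[OF soc1 S] by auto
        have "C {d} Phi {y,x} = C {d} Phi S \<inter> {y,x}" by (rule restr2[OF soc1 _ y]) (use xS yS in auto)
        hence "C {d} Phi {y,x} = {y}" using y nx by auto
        hence "C N Phi {y,x} = {y}" using d(2) xy unfolding dec_def by auto
        moreover have "C N Phi {y,x} = C N Phi S \<inter> {y,x}" by (rule restr2[OF N _ x]) (use xS yS in auto)
        ultimately show False using x xy by auto
      qed
    qed
    moreover have "models (B (nabla N Phi E)) = C N Phi S" by (rule C_E[OF N]) (simp add: S_def)
    moreover have "models (B (nabla {d} (\<lambda>_. Phi d) E)) = C {d} (\<lambda>_. Phi d) S" by (rule C_E[OF soc1]) (simp add: S_def)
    moreover have "C {d} (\<lambda>_. Phi d) S = C {d} Phi S" by (rule C_single[symmetric])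
    ultimately show "entails (B (nabla N Phi E)) (B (nabla {d} (\<lambda>_. Phi d) E))"
      unfolding entails_models by simp
  qed
  thus "\<exists>d\<in>N. \<forall>Phi E. entails (B (nabla N Phi E)) (B (nabla {d} (\<lambda>_. Phi d) E))" using d(1) by blast
qed

end

theorem corollary1:
  fixes B :: "'e \<Rightarrow> 'p::finite form"
    and nabla :: "'a::wellorder set \<Rightarrow> ('a \<Rightarrow> 'e) \<Rightarrow> 'e \<Rightarrow> 'e"
  assumes "epistemic_space B"
    and "card (UNIV :: 'p set) \<ge> 2"
    and "es_basic_fusion B nabla"
    and "esf_sd B nabla"
    and "esf7 B nabla"
    and "esf8w B nabla"
    and "esf_i B nabla"
  shows "esf_d B nabla"
proof -
  interpret fus B nabla using assms by unfold_locales
  show ?thesis by (rule final)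
qed

end
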